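(* Let $G$ be a finite group and let $p$ be a prime. Then $G$ does not have a redundant Sylow $p$-subgroup if and only if there exists a $p$-element $x\in G$ that belongs to a unique Sylow $p$-subgroup of $G$.
   Context: For a finite group $G$ and a prime $p$, $G_p$ denotes the set of $p$-elements of $G$ and $\mathrm{Syl}_p(G)$ the set of Sylow $p$-subgroups of $G$. $G$ is said to have a redundant Sylow $p$-subgroup if $G_p$ is contained in the union of the members of some proper subset of $\mathrm{Syl}_p(G)$. *)

theory Defs
  imports "HOL-Algebra.Algebra" "HOL-Computational_Algebra.Primes"
begin

definition p_elements :: "('a, 'b) monoid_scheme \<Rightarrow> nat \<Rightarrow> 'a set" where
  "p_elements G p = {x \<in> carrier G. \<exists>n. group.ord G x = p ^ n}"

definition Syl :: "('a, 'b) monoid_scheme \<Rightarrow> nat \<Rightarrow> 'a set set" where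
  "Syl G p = {P. subgroup P G \<and> card P = p ^ multiplicity p (order G)}"

definition has_redundant_Sylow :: "('a, 'b) monoid_scheme \<Rightarrow> nat \<Rightarrow> bool" where
  "has_redundant_Sylow G p \<longleftrightarrow> (\<exists>S. S \<subset> Syl G p \<and> p_elements G p \<subseteq> \<Union> S)"

end

theory Submission
  imports Defs
begin


lemma (in group) fixed_coset:
  assumes fin: "finite (carrier G)" and p: "Factorial_Ring.prime p" and P: "subgroup P G"
    and nd: "\<not> p dvd card (rcosets P)"
    and K: "subgroup K G" "card K = p ^ k"
  shows "\<exists>g\<in>carrier G. \<forall>h\<in>K. P #> (g \<otimes> h) = P #> g"
proof (rule ccontr)
  assume nfix: "\<not> ?thesis"
  define HK where "HK = G\<lparr>carrier := K\<rparr>"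
  define E where "E = rcosets P"
  define \<phi> where "\<phi> = (\<lambda>h. \<lambda>C\<in>E. C #> inv h)"
  have Ksub: "K \<subseteq> carrier G" using K subgroup.subset by blast
  have grpHK: "group HK" unfolding HK_def using K(1) subgroup.subgroup_is_group is_group by blast
  have cE: "C #> x \<in> E" if "C \<in> E" "x \<in> carrier G" for C x
  proof -
    from that obtain g where g: "g \<in> carrier G" "C = P #> g" unfolding E_def RCOSETS_def by auto
    then have "C #> x = P #> (g \<otimes> x)" using coset_mult_assoc P subgroup.subset that by metis
    then show ?thesis unfolding E_def using g that P subgroup.subset rcosetsI by (metis m_closed)
  qed
  have ccE: "(C #> x) #> inv x = C" if "C \<in> E" "x \<in> carrier G" for C x
  proof -
    from that obtain g where g: "g \<in> carrier G" "C = P #> g" unfolding E_def RCOSETS_def by auto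
    then show ?thesis using coset_mult_assoc P subgroup.subset that
      by (metis coset_mult_one inv_closed r_inv r_coset_subset_G)
  qed
  have phiB: "\<phi> h \<in> Bij E" if "h \<in> K" for h
  proof -
    have h: "h \<in> carrier G" using that Ksub by blast
    have "bij_betw (\<lambda>C. C #> inv h) E E"
      apply (rule bij_betwI[where g="\<lambda>C. C #> h"])
      subgoal using cE h by (auto simp: Pi_def)
      subgoal using cE h by (auto simp: Pi_def)
      subgoal for C using ccE[of C "inv h"] h by (simp add: inv_inv)
      subgoal for C using ccE h by blast
      done
    then have "bij_betw (\<phi> h) E E" unfolding \<phi>_def by (rule bij_betw_cong[THEN iffD1, rotated]) auto
    then show ?thesis unfolding Bij_def \<phi>_def by auto
  qed
  have act: "group_action HK E \<phi>"
  proof -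
    have "\<phi> \<in> hom HK (BijGroup E)"
    proof (rule homI)
      show "\<phi> x \<in> carrier (BijGroup E)" if "x \<in> carrier HK" for x
        using phiB that by (simp add: HK_def BijGroup_def)
      show "\<phi> (x \<otimes>\<^bsub>HK\<^esub> y) = \<phi> x \<otimes>\<^bsub>BijGroup E\<^esub> \<phi> y" if "x \<in> carrier HK" "y \<in> carrier HK" for x y
      proof -
        have xy: "x \<in> carrier G" "y \<in> carrier G" "x \<in> K" "y \<in> K" using that Ksub by (auto simp: HK_def)
        have "\<phi> (x \<otimes> y) = compose E (\<phi> x) (\<phi> y)"
        proof
          fix C show "\<phi> (x \<otimes> y) C = compose E (\<phi> x) (\<phi> y) C"
          proof (cases "C \<in> E")
            case True
            then have "C \<subseteq> carrier G" unfolding E_def using P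
              by (metis Sup_upper rcosets_part_G subgroup.subset subset_trans)
            then show ?thesis using xy cE[of C "inv y"] True
              by (auto simp: \<phi>_def compose_def inv_mult_group coset_mult_assoc)
          qed (simp add: \<phi>_def compose_def)
        qed
        then show ?thesis using phiB xy by (simp add: HK_def BijGroup_def)
      qed
    qed
    then show ?thesis unfolding group_action_def group_hom_def group_hom_axioms_def
      using grpHK group_BijGroup by blast
  qed
  interpret A: group_action HK E \<phi> by (rule act)
  have Esub: "E \<subseteq> Pow (carrier G)" unfolding E_def using P
    by (metis Pow_iff Sup_upper rcosets_part_G subsetI)
  have finE: "finite E" using Esub fin by (meson finite_Pow_iff rev_finite_subset)
  have orbdvd: "p dvd card Ob" if Ob: "Ob \<in> orbits HK E \<phi>" for Ob
  proof -
    obtain C where C: "C \<in> E" "Ob = orbit HK \<phi> C" using Ob unfolding orbits_def by blast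
    have "card Ob * card (stabilizer HK \<phi> C) = p ^ k"
      using A.orbit_stabilizer_theorem[OF C(1)] C K by (simp add: order_def HK_def)
    then have "card Ob dvd p ^ k" by (metis dvd_triv_left)
    then obtain j where j: "card Ob = p ^ j" using p by (auto simp: divides_primepow_nat)
    have Osub: "Ob \<subseteq> E" using C A.element_image unfolding orbit_def by blast
    obtain g where g: "g \<in> carrier G" "C = P #> g" using C unfolding E_def RCOSETS_def by auto
    then obtain h where h: "h \<in> K" "P #> (g \<otimes> h) \<noteq> P #> g" using nfix by blast
    have hc: "h \<in> carrier G" using h Ksub by blast
    have eq: "\<phi> (inv h) C = P #> (g \<otimes> h)"
      using C g hc P subgroup.subset[OF P] by (simp add: \<phi>_def coset_mult_assoc)
    have ih: "inv h \<in> carrier HK" using h K by (simp add: HK_def subgroup.m_inv_closed)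
    have X: "\<phi> (inv h) C \<in> Ob" unfolding C(2) orbit_def using ih by blast
    have neq: "\<phi> (inv h) C \<noteq> C" using eq h(2) g(2) by simp
    have "C \<in> Ob" using A.orbit_refl C by blast
    then have sub2: "{C, \<phi> (inv h) C} \<subseteq> Ob" using X by blast
    have c2: "card {C, \<phi> (inv h) C} = 2" using neq by simp
    have finOb: "finite Ob" using Osub finE by (rule rev_finite_subset[rotated])
    have "2 \<le> card Ob" using card_mono[OF finOb sub2] c2 by simp
    then have "j \<noteq> 0" using j by (cases j) auto
    then show ?thesis using j by (simp add: dvd_power)
  qed
  have "(\<Sum>Ob\<in>orbits HK E \<phi>. \<Sum>x\<in>Ob. (1::nat)) = (\<Sum>x\<in>E. 1)"
    by (rule A.disjoint_sum[OF finE])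
  then have "card E = (\<Sum>Ob\<in>orbits HK E \<phi>. card Ob)" by simp
  also have "p dvd \<dots>" using orbdvd by (simp add: dvd_sum)
  finally show False using nd unfolding E_def by simp
qed
definition cj :: "('a, 'b) monoid_scheme \<Rightarrow> 'a \<Rightarrow> 'a set \<Rightarrow> 'a set" where
  "cj G g A = (\<lambda>x. g \<otimes>\<^bsub>G\<^esub> x \<otimes>\<^bsub>G\<^esub> inv\<^bsub>G\<^esub> g) ` A"

context group begin

lemma lc1: "g \<in> carrier G \<Longrightarrow> y \<in> carrier G \<Longrightarrow> inv g \<otimes> (g \<otimes> y) = y"
  by (simp add: m_assoc[symmetric])
lemma lc2: "g \<in> carrier G \<Longrightarrow> y \<in> carrier G \<Longrightarrow> g \<otimes> (inv g \<otimes> y) = y"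
  by (simp add: m_assoc[symmetric])

lemma cj_coset: "cj G g A = g <# A #> inv g"
  unfolding cj_def l_coset_def r_coset_def by auto

lemma cj_subgroup: assumes "g \<in> carrier G" "subgroup A G" shows "subgroup (cj G g A) G"
  using subgroup_conjugation_is_surj1[of "inv g" A] assms by (simp add: cj_coset)

lemma cj_card: assumes "g \<in> carrier G" "A \<subseteq> carrier G" shows "card (cj G g A) = card A"
  unfolding cj_def
  by (rule card_image) (use assms in \<open>auto intro!: inj_onI dest: conjugation_is_inj\<close>)

lemma cj_mem: "x \<in> A \<Longrightarrow> g \<otimes> x \<otimes> inv g \<in> cj G g A"
  unfolding cj_def by auto

lemma cj_cj: assumes "g \<in> carrier G" "A \<subseteq> carrier G" shows "cj G (inv g) (cj G g A) = A"
proof -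
  have "cj G (inv g) (cj G g A) = (\<lambda>x. inv g \<otimes> (g \<otimes> x \<otimes> inv g) \<otimes> inv (inv g)) ` A"
    unfolding cj_def image_image by simp
  also have "\<dots> = (\<lambda>x. x) ` A"
    using assms by (intro image_cong) (auto simp: m_assoc lc1 subsetD)
  finally show ?thesis by simp
qed

lemma cj_Syl: assumes g: "g \<in> carrier G" and P: "P \<in> Syl G p" shows "cj G g P \<in> Syl G p"
proof -
  have sg: "subgroup P G" and cP: "card P = p ^ multiplicity p (order G)" using P unfolding Syl_def by auto
  have "subgroup (cj G g P) G" by (rule cj_subgroup[OF g sg])
  moreover have "card (cj G g P) = card P" by (rule cj_card[OF g subgroup.subset[OF sg]])
  ultimately show ?thesis using cP unfolding Syl_def by simp
qed

lemma conj_pow: assumes "g \<in> carrier G" "x \<in> carrier G"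
  shows "(g \<otimes> x \<otimes> inv g) [^] (n::nat) = g \<otimes> x [^] n \<otimes> inv g"
proof (induction n)
  case 0 then show ?case using assms by simp
next
  case (Suc n)
  have "(g \<otimes> x \<otimes> inv g) [^] Suc n = (g \<otimes> x [^] n \<otimes> inv g) \<otimes> (g \<otimes> x \<otimes> inv g)"
    using Suc by simp
  also have "\<dots> = g \<otimes> (x [^] n \<otimes> x) \<otimes> inv g"
    using assms by (simp add: m_assoc lc1)
  finally show ?case by simp
qed

lemma ord_conj: assumes "g \<in> carrier G" "x \<in> carrier G"
  shows "ord (g \<otimes> x \<otimes> inv g) = ord x"
proof -
  have "\<And>n. ord (g \<otimes> x \<otimes> inv g) dvd n \<longleftrightarrow> ord x dvd n"
  proof -
    fix n :: nat
    have "(g \<otimes> x \<otimes> inv g) [^] n = \<one> \<longleftrightarrow> x [^] n = \<one>"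
      using assms by (simp add: conj_pow) (metis conjugation_is_inj one_closed l_one r_inv nat_pow_closed m_closed inv_closed r_one)
    then show "ord (g \<otimes> x \<otimes> inv g) dvd n \<longleftrightarrow> ord x dvd n"
      using assms by (simp add: pow_eq_id)
  qed
  then show ?thesis by (meson dvd_antisym dvd_refl)
qed

lemma conj_pel: assumes "g \<in> carrier G" "x \<in> p_elements G p"
  shows "g \<otimes> x \<otimes> inv g \<in> p_elements G p"
  using assms ord_conj unfolding p_elements_def by auto


lemma syl_index: assumes fin: "finite (carrier G)" and p: "Factorial_Ring.prime p" and P: "P \<in> Syl G p"
  shows "\<not> p dvd card (rcosets P)"
proof
  assume d: "p dvd card (rcosets P)"
  define a where "a = multiplicity p (order G)"
  have sg: "subgroup P G" and cP: "card P = p ^ a" using P unfolding Syl_def a_def by auto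
  have "card (rcosets P) * p ^ a = order G" using lagrange[OF sg] cP by simp
  then have "p * p ^ a dvd order G" using d by (metis mult_dvd_mono dvd_refl dvd_def)
  then have "p ^ Suc a dvd order G" by simp
  moreover have "order G \<noteq> 0" using fin unfolding order_def by (auto simp: card_eq_0_iff)
  ultimately have "Suc a \<le> a" unfolding a_def using p
    by (intro multiplicity_geI) (auto simp: not_prime_unit)
  then show False by simp
qed

lemma syl_exists: assumes fin: "finite (carrier G)" and p: "Factorial_Ring.prime p"
  shows "\<exists>P. P \<in> Syl G p"
proof -
  define a where "a = multiplicity p (order G)"
  have "order G = p ^ a * (order G div p ^ a)" unfolding a_def by (simp add: multiplicity_dvd)
  then obtain H where "subgroup H G" "card H = p ^ a"
    using sylow_thm[of p G a "order G div p ^ a"] p fin is_group by auto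
  then show ?thesis unfolding Syl_def a_def by auto
qed

lemma contain_conj: assumes fin: "finite (carrier G)" and p: "Factorial_Ring.prime p"
  and P: "P \<in> Syl G p" and K: "subgroup K G" "card K = p ^ k"
  shows "\<exists>g\<in>carrier G. K \<subseteq> cj G g P"
proof -
  have sg: "subgroup P G" using P unfolding Syl_def by auto
  obtain g where g: "g \<in> carrier G" and fx: "\<forall>h\<in>K. P #> (g \<otimes> h) = P #> g"
    using fixed_coset[OF fin p sg syl_index[OF fin p P] K] by blast
  have "h \<in> cj G (inv g) P" if h: "h \<in> K" for h
  proof -
    have hc: "h \<in> carrier G" using h K(1) subgroup.subset by blast
    have "g \<otimes> h \<in> P #> (g \<otimes> h)" using rcos_self g hc sg by simp
    then have "g \<otimes> h \<in> P #> g" using fx h by simp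
    then have "(g \<otimes> h) \<otimes> inv g \<in> P" using subgroup.rcos_module_imp[OF sg is_group g] by blast
    then have "inv g \<otimes> ((g \<otimes> h) \<otimes> inv g) \<otimes> inv (inv g) \<in> cj G (inv g) P" by (rule cj_mem)
    moreover have "inv g \<otimes> ((g \<otimes> h) \<otimes> inv g) \<otimes> inv (inv g) = h"
      using g hc by (simp add: m_assoc lc1)
    ultimately show ?thesis by simp
  qed
  then show ?thesis using g by blast
qed

lemma sylow_conj: assumes fin: "finite (carrier G)" and p: "Factorial_Ring.prime p"
  and P: "P \<in> Syl G p" and R: "R \<in> Syl G p"
  shows "\<exists>g\<in>carrier G. R = cj G g P"
proof -
  have sR: "subgroup R G" "card R = p ^ multiplicity p (order G)" using R unfolding Syl_def by auto
  obtain g where g: "g \<in> carrier G" "R \<subseteq> cj G g P" using contain_conj[OF fin p P sR] by blast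
  have cS: "cj G g P \<in> Syl G p" using cj_Syl g P by blast
  then have "cj G g P \<subseteq> carrier G" unfolding Syl_def using subgroup.subset by blast
  then have "finite (cj G g P)" using fin rev_finite_subset by blast
  moreover have "card R = card (cj G g P)" using cS sR unfolding Syl_def by simp
  ultimately have "R = cj G g P" using g(2) card_subset_eq by blast
  then show ?thesis using g by blast
qed

lemma in_sylow: assumes fin: "finite (carrier G)" and p: "Factorial_Ring.prime p"
  and x: "x \<in> p_elements G p"
  shows "\<exists>P\<in>Syl G p. x \<in> P"
proof -
  obtain n where xc: "x \<in> carrier G" and on: "ord x = p ^ n" using x unfolding p_elements_def by auto
  define K where "K = generate G {x}"
  have sK: "subgroup K G" unfolding K_def using xc by (simp add: generate_is_subgroup)
  have cK: "card K = p ^ n" unfolding K_def using generate_pow_card[OF xc] on by simp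
  obtain P where P: "P \<in> Syl G p" using syl_exists[OF fin p] by blast
  obtain g where g: "g \<in> carrier G" "K \<subseteq> cj G g P" using contain_conj[OF fin p P sK cK] by blast
  have "x \<in> K" unfolding K_def by (simp add: generate.incl)
  then show ?thesis using g cj_Syl P by blast
qed

end

theorem lemma2p1:
  fixes G (structure) and p :: nat
  assumes "group G" and "finite (carrier G)" and "Factorial_Ring.prime p"
  shows "\<not> has_redundant_Sylow G p \<longleftrightarrow>
           (\<exists>x \<in> p_elements G p. \<exists>!P. P \<in> Syl G p \<and> x \<in> P)"
proof -
  interpret group G by (rule assms(1))
  note fin = assms(2) and p = assms(3)
  show ?thesis
  proof
    assume nr: "\<not> has_redundant_Sylow G p"
    show "\<exists>x \<in> p_elements G p. \<exists>!P. P \<in> Syl G p \<and> x \<in> P"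
    proof (rule ccontr)
      assume nex: "\<not> ?thesis"
      obtain P0 where P0: "P0 \<in> Syl G p" using syl_exists[OF fin p] by blast
      have ss: "Syl G p - {P0} \<subset> Syl G p" using P0 by blast
      have "p_elements G p \<subseteq> \<Union> (Syl G p - {P0})"
      proof
        fix x assume x: "x \<in> p_elements G p"
        obtain Q where Q: "Q \<in> Syl G p" "x \<in> Q" using in_sylow[OF fin p x] by blast
        have nu: "\<not> (\<exists>!P. P \<in> Syl G p \<and> x \<in> P)" using nex x by blast
        have "\<exists>Q'. Q' \<in> Syl G p \<and> x \<in> Q' \<and> Q' \<noteq> Q"
        proof (rule ccontr)
          assume nq: "\<not> (\<exists>Q'. Q' \<in> Syl G p \<and> x \<in> Q' \<and> Q' \<noteq> Q)"
          have "\<exists>!P. P \<in> Syl G p \<and> x \<in> P"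
          proof (rule ex1I[of _ Q])
            show "Q \<in> Syl G p \<and> x \<in> Q" using Q by simp
          next
            fix y assume "y \<in> Syl G p \<and> x \<in> y"
            then show "y = Q" using nq by blast
          qed
          then show False using nu by contradiction
        qed
        then obtain Q' where Q': "Q' \<in> Syl G p" "x \<in> Q'" "Q' \<noteq> Q" by blast
        show "x \<in> \<Union> (Syl G p - {P0})"
        proof (cases "Q = P0")
          case True then show ?thesis using Q' by blast
        next
          case False then show ?thesis using Q by blast
        qed
      qed
      then show False using nr ss unfolding has_redundant_Sylow_def by blast
    qed
  next
    assume "\<exists>x \<in> p_elements G p. \<exists>!P. P \<in> Syl G p \<and> x \<in> P"
    then obtain x where x: "x \<in> p_elements G p" and e1: "\<exists>!P. P \<in> Syl G p \<and> x \<in> P" by blast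
    obtain P where P: "P \<in> Syl G p" "x \<in> P"
      and uq0: "\<forall>Q. Q \<in> Syl G p \<and> x \<in> Q \<longrightarrow> Q = P" using ex1E[OF e1] by blast
    have uq: "\<And>Q. Q \<in> Syl G p \<Longrightarrow> x \<in> Q \<Longrightarrow> Q = P" using uq0 by blast
    have xc: "x \<in> carrier G" using x unfolding p_elements_def by auto
    show "\<not> has_redundant_Sylow G p"
    proof
      assume "has_redundant_Sylow G p"
      then obtain S where S: "S \<subset> Syl G p" "p_elements G p \<subseteq> \<Union> S"
        unfolding has_redundant_Sylow_def by blast
      obtain R where R: "R \<in> Syl G p" "R \<notin> S" using S(1) by blast
      obtain g where g: "g \<in> carrier G" "R = cj G g P" using sylow_conj[OF fin p P(1) R(1)] by blast
      define y where "y = g \<otimes> x \<otimes> inv g"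
      have yp: "y \<in> p_elements G p" unfolding y_def using conj_pel g x by blast
      then obtain Q where Q: "Q \<in> S" "y \<in> Q" using S(2) by blast
      have QS: "Q \<in> Syl G p" using Q S(1) by blast
      have Qc: "Q \<subseteq> carrier G" using QS unfolding Syl_def using subgroup.subset by blast
      have "inv g \<otimes> y \<otimes> inv (inv g) \<in> cj G (inv g) Q" using Q(2) by (rule cj_mem)
      moreover have "inv g \<otimes> y \<otimes> inv (inv g) = x" unfolding y_def using g xc
        by (simp add: m_assoc lc1)
      ultimately have "x \<in> cj G (inv g) Q" by simp
      moreover have "cj G (inv g) Q \<in> Syl G p" using cj_Syl g QS by blast
      ultimately have "cj G (inv g) Q = P" using uq by blast
      then have "cj G g P = Q" using cj_cj[of "inv g" Q] g Qc by simp
      then show False using g R Q by simp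
    qed
  qed
qed

end
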